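(* There exist absolute constants $a,b>0$ such that the following holds. Let $A$ be a finite multiset of $n$ points in $\mathbb{R}^d$ and $\varepsilon,\delta\in(0,1)$. Let $k=b\log\delta^{-1}$ and, for $i=1,\dots,k$, let $\hat\mu_i$ be the average of $a\varepsilon^{-1}$ points drawn independently and uniformly at random from $A$ (all draws independent). Then, with probability at least $1-\delta$, every geometric median $m\in\arg\min_{c\in\mathbb{R}^d}\sum_{i=1}^{k}\|\hat\mu_i-c\|$ is a $(1+\varepsilon)$-approximate mean of $A$.
   Context: For a finite multiset $A\subset\mathbb{R}^d$, let $\mathrm{Opt}=\min_{x\in\mathbb{R}^d}\sum_{p\in A}\|p-x\|^2$ (Euclidean norm). A point $x$ is a $(1+\varepsilon)$-approximate mean of $A$ if $\sum_{p\in A}\|p-x\|^2\le(1+\varepsilon)\mathrm{Opt}$. Integrality of $k$ and $a\varepsilon^{-1}$ is ignored. *)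

theory Defs
  imports "HOL-Probability.Probability"
begin

text \<open>Points of R^d are represented as functions nat => real vanishing outside {0..<d},
  so that the dimension d can be quantified inside the statement (the constants a, b
  must be absolute, i.e. independent of d).\<close>

definition rvec :: "nat \<Rightarrow> (nat \<Rightarrow> real) set" where
  "rvec d = {x. \<forall>i\<ge>d. x i = 0}"

definition enorm :: "nat \<Rightarrow> (nat \<Rightarrow> real) \<Rightarrow> real" where
  "enorm d x = sqrt (\<Sum>i<d. (x i)^2)"

definition vdiff :: "(nat \<Rightarrow> real) \<Rightarrow> (nat \<Rightarrow> real) \<Rightarrow> (nat \<Rightarrow> real)" where
  "vdiff x y = (\<lambda>t. x t - y t)"

definition sqcost :: "nat \<Rightarrow> (nat \<Rightarrow> real) multiset \<Rightarrow> (nat \<Rightarrow> real) \<Rightarrow> real" where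
  "sqcost d A c = (\<Sum>p\<in>#A. (enorm d (vdiff p c))^2)"

definition Opt :: "nat \<Rightarrow> (nat \<Rightarrow> real) multiset \<Rightarrow> real" where
  "Opt d A = Inf (sqcost d A ` rvec d)"

definition approx_mean :: "nat \<Rightarrow> (nat \<Rightarrow> real) multiset \<Rightarrow> real \<Rightarrow> (nat \<Rightarrow> real) \<Rightarrow> bool" where
  "approx_mean d A eps x \<longleftrightarrow> x \<in> rvec d \<and> sqcost d A x \<le> (1 + eps) * Opt d A"

definition geo_median :: "nat \<Rightarrow> nat \<Rightarrow> (nat \<Rightarrow> nat \<Rightarrow> real) \<Rightarrow> (nat \<Rightarrow> real) \<Rightarrow> bool" where
  "geo_median d k mu m \<longleftrightarrow> m \<in> rvec d \<and>
     (\<forall>c\<in>rvec d. (\<Sum>i<k. enorm d (vdiff (mu i) m)) \<le> (\<Sum>i<k. enorm d (vdiff (mu i) c)))"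

definition draws :: "(nat \<Rightarrow> real) multiset \<Rightarrow> nat \<Rightarrow> nat \<Rightarrow> (nat \<times> nat \<Rightarrow> nat \<Rightarrow> real) pmf" where
  "draws A k s = Pi_pmf ({0..<k} \<times> {0..<s}) (\<lambda>_. 0) (\<lambda>_. pmf_of_multiset A)"

definition group_mean :: "nat \<Rightarrow> (nat \<times> nat \<Rightarrow> nat \<Rightarrow> real) \<Rightarrow> nat \<Rightarrow> nat \<Rightarrow> real" where
  "group_mean s x i = (\<lambda>t. (\<Sum>j<s. x (i, j) t) / real s)"

end

theory Submission
  imports Defs
begin

lemma enorm_L2: "enorm d x = L2_set x {..<d}"
  by (simp add: enorm_def L2_set_def)

lemma enorm_nonneg: "0 \<le> enorm d x"
  unfolding enorm_def by (intro real_sqrt_ge_zero sum_nonneg) simp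

lemma enorm_sq: "(enorm d x)^2 = (\<Sum>i<d. (x i)^2)"
  unfolding enorm_def by (rule real_sqrt_pow2, intro sum_nonneg, simp)

lemma enorm_sym: "enorm d (vdiff x y) = enorm d (vdiff y x)"
  unfolding enorm_def vdiff_def by (simp add: power2_commute)

lemma enorm_tri: "enorm d (vdiff x z) \<le> enorm d (vdiff x y) + enorm d (vdiff y z)"
proof -
  have "enorm d (vdiff x z) = L2_set (\<lambda>i. (x i - y i) + (y i - z i)) {..<d}"
    by (simp add: enorm_L2 vdiff_def)
  also have "\<dots> \<le> L2_set (\<lambda>i. x i - y i) {..<d} + L2_set (\<lambda>i. y i - z i) {..<d}"
    by (rule L2_set_triangle_ineq)
  finally show ?thesis by (simp add: enorm_L2 vdiff_def)
qed

lemma msum: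
  fixes f :: "'a \<Rightarrow> real"
  shows "(\<Sum>p\<in>#A. f p) = (\<Sum>x\<in>set_mset A. real (count A x) * f x)"
proof (induction A)
  case empty
  then show ?case by simp
next
  case (add y A)
  show ?case
  proof (cases "y \<in># A")
    case True
    have "(\<Sum>x\<in>set_mset (add_mset y A). real (count (add_mset y A) x) * f x)
        = (\<Sum>x\<in>set_mset A. real (count A x) * f x + (if x = y then f x else 0))"
      using True by (intro sum.cong) (auto simp: algebra_simps insert_absorb)
    also have "\<dots> = (\<Sum>x\<in>set_mset A. real (count A x) * f x) + f y"
      using True by (simp add: sum.distrib)
    finally show ?thesis using add by simp
  next
    case False
    have "(\<Sum>x\<in>set_mset (add_mset y A). real (count (add_mset y A) x) * f x)
        = real (count (add_mset y A) y) * f y + (\<Sum>x\<in>set_mset A. real (count (add_mset y A) x) * f x)"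
      using False by (simp add: sum.insert)
    also have "(\<Sum>x\<in>set_mset A. real (count (add_mset y A) x) * f x) = (\<Sum>x\<in>set_mset A. real (count A x) * f x)"
      using False by (intro sum.cong) auto
    finally show ?thesis using add False by (simp add: not_in_iff)
  qed
qed

lemma expect_multiset:
  fixes f :: "_ \<Rightarrow> real"
  assumes "A \<noteq> {#}"
  shows "measure_pmf.expectation (pmf_of_multiset A) f = (\<Sum>p\<in>#A. f p) / real (size A)"
proof -
  have "measure_pmf.expectation (pmf_of_multiset A) f = (\<Sum>x\<in>set_mset A. f x * pmf (pmf_of_multiset A) x)"
    using assms by (intro integral_measure_pmf_real) auto
  also have "\<dots> = (\<Sum>x\<in>set_mset A. real (count A x) * f x) / real (size A)"
    using assms by (simp add: sum_divide_distrib algebra_simps)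
  finally show ?thesis by (simp add: msum)
qed

lemma geo_robust:
  fixes y :: "nat \<Rightarrow> nat \<Rightarrow> real"
  assumes min: "(\<Sum>i<k. enorm d (vdiff (y i) m)) \<le> (\<Sum>i<k. enorm d (vdiff (y i) mu))"
    and few: "3 * card {i\<in>{..<k}. r < enorm d (vdiff (y i) mu)} < k" and r: "0 \<le> r"
  shows "enorm d (vdiff m mu) \<le> 6 * r"
proof -
  define D where "D = enorm d (vdiff m mu)"
  define e where "e i = enorm d (vdiff (y i) mu)" for i
  define Bd where "Bd = {i\<in>{..<k}. r < e i}"
  define B where "B = card Bd"
  define h where "h i = (if i \<in> Bd then - D else D - 2 * r)" for i
  have D0: "0 \<le> D" by (simp add: D_def enorm_nonneg)
  have fin: "finite Bd" by (simp add: Bd_def)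
  have Bk: "Bd \<subseteq> {..<k}" by (auto simp: Bd_def)
  have hle: "h i \<le> enorm d (vdiff (y i) m) - e i" if "i < k" for i
  proof (cases "i \<in> Bd")
    case True
    have "e i \<le> enorm d (vdiff (y i) m) + enorm d (vdiff m mu)"
      unfolding e_def by (rule enorm_tri)
    then show ?thesis using True by (simp add: h_def D_def)
  next
    case False
    then have "e i \<le> r" using that by (auto simp: Bd_def)
    moreover have "D \<le> enorm d (vdiff m (y i)) + e i"
      unfolding D_def e_def by (rule enorm_tri)
    moreover have "enorm d (vdiff m (y i)) = enorm d (vdiff (y i) m)" by (rule enorm_sym)
    ultimately show ?thesis using False by (simp add: h_def)
  qed
  have "(\<Sum>i<k. h i) \<le> (\<Sum>i<k. enorm d (vdiff (y i) m) - e i)"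
    by (intro sum_mono hle) simp
  also have "\<dots> \<le> 0" using min by (simp add: sum_subtractf e_def)
  finally have s0: "(\<Sum>i<k. h i) \<le> 0" .
  have "(\<Sum>i<k. h i) = (\<Sum>i\<in>Bd. - D) + (\<Sum>i\<in>{..<k} - Bd. D - 2 * r)"
  proof -
    have "(\<Sum>i<k. h i) = (\<Sum>i\<in>Bd. h i) + (\<Sum>i\<in>{..<k} - Bd. h i)"
      using Bk by (metis add.commute finite_lessThan sum.subset_diff)
    also have "(\<Sum>i\<in>Bd. h i) = (\<Sum>i\<in>Bd. - D)" by (intro sum.cong) (auto simp: h_def)
    also have "(\<Sum>i\<in>{..<k} - Bd. h i) = (\<Sum>i\<in>{..<k} - Bd. D - 2 * r)" by (intro sum.cong) (auto simp: h_def)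
    finally show ?thesis .
  qed
  also have "\<dots> = - real B * D + (real k - real B) * (D - 2 * r)"
    using Bk fin card_mono[OF _ Bk] by (simp add: card_Diff_subset B_def of_nat_diff)
  finally have ineq: "(real k - 2 * real B) * D \<le> 2 * r * (real k - real B)"
    using s0 by (simp add: algebra_simps)
  have B3: "3 * real B < real k" using few by (simp add: B_def Bd_def e_def)
  have "real k \<le> 3 * (real k - 2 * real B)" using B3 by (simp add: algebra_simps)
  then have "real k * D \<le> (3 * (real k - 2 * real B)) * D" using D0 by (rule mult_right_mono)
  then have "real k * D \<le> 3 * ((real k - 2 * real B) * D)" by (simp add: algebra_simps)
  also have "\<dots> \<le> 3 * (2 * r * (real k - real B))" using ineq by (simp add: algebra_simps)
  also have "\<dots> \<le> real k * (6 * r)"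
  proof -
    have "0 \<le> r * real B" using r by simp
    then show ?thesis by (simp add: algebra_simps)
  qed
  finally have "real k * D \<le> real k * (6 * r)" .
  moreover have "0 < real k" using few by simp
  ultimately show ?thesis unfolding D_def by simp
qed

definition mmean :: "(nat \<Rightarrow> real) multiset \<Rightarrow> nat \<Rightarrow> real" where
  "mmean A = (\<lambda>t. (\<Sum>p\<in>#A. p t) / real (size A))"

lemma mmean_rvec:
  assumes "set_mset A \<subseteq> rvec d" shows "mmean A \<in> rvec d"
proof -
  have "(\<Sum>p\<in>#A. p i) = 0" if "d \<le> i" for i
    using assms that by (intro sum_mset.neutral) (auto simp: rvec_def)
  then show ?thesis by (simp add: rvec_def mmean_def)
qed

lemma sum_mset_minus_const:
  fixes f :: "_ \<Rightarrow> real"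
  shows "(\<Sum>p\<in>#A. f p - c) = (\<Sum>p\<in>#A. f p) - real (size A) * c"
  by (induction A) (auto simp: algebra_simps)

lemma centered:
  assumes "A \<noteq> {#}"
  shows "(\<Sum>p\<in>#A. p t - mmean A t) = 0"
proof -
  have "(\<Sum>p\<in>#A. p t - mmean A t) = (\<Sum>p\<in>#A. p t) - real (size A) * mmean A t"
    by (rule sum_mset_minus_const)
  also have "\<dots> = 0" using assms by (simp add: mmean_def)
  finally show ?thesis .
qed

lemma sqcost_decomp:
  assumes "A \<noteq> {#}"
  shows "sqcost d A c = sqcost d A (mmean A) + real (size A) * (enorm d (vdiff c (mmean A)))^2"
proof -
  let ?mu = "mmean A"
  have pt: "(\<Sum>p\<in>#A. (p t - c t)^2) = (\<Sum>p\<in>#A. (p t - ?mu t)^2) + real (size A) * (c t - ?mu t)^2" for t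
  proof -
    have "(\<Sum>p\<in>#A. (p t - c t)^2) = (\<Sum>p\<in>#A. (p t - ?mu t)^2 + (2 * (?mu t - c t)) * (p t - ?mu t) + (c t - ?mu t)^2)"
      by (intro arg_cong[where f=sum_mset] image_mset_cong) (simp add: power2_eq_square algebra_simps)
    also have "\<dots> = (\<Sum>p\<in>#A. (p t - ?mu t)^2) + (2 * (?mu t - c t)) * (\<Sum>p\<in>#A. p t - ?mu t) + real (size A) * (c t - ?mu t)^2"
      by (simp add: sum_mset.distrib sum_mset_distrib_left)
    finally show ?thesis using centered[OF assms, of t] by simp
  qed
  have swap: "(\<Sum>p\<in>#A. \<Sum>t<d. f p t) = (\<Sum>t<d. \<Sum>p\<in>#A. f p t)" for f :: "_ \<Rightarrow> nat \<Rightarrow> real"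
    by (induction A) (auto simp: sum.distrib)
  have "sqcost d A c = (\<Sum>t<d. \<Sum>p\<in>#A. (p t - c t)^2)"
    unfolding sqcost_def enorm_sq vdiff_def by (rule swap)
  also have "\<dots> = (\<Sum>t<d. \<Sum>p\<in>#A. (p t - ?mu t)^2) + real (size A) * (\<Sum>t<d. (c t - ?mu t)^2)"
    by (simp add: pt sum.distrib sum_distrib_left)
  also have "(\<Sum>t<d. \<Sum>p\<in>#A. (p t - ?mu t)^2) = sqcost d A ?mu"
    unfolding sqcost_def enorm_sq vdiff_def by (rule swap[symmetric])
  finally show ?thesis by (simp add: enorm_sq vdiff_def)
qed

lemma Opt_eq:
  assumes "A \<noteq> {#}" "set_mset A \<subseteq> rvec d"
  shows "Opt d A = sqcost d A (mmean A)"
  unfolding Opt_def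
proof (rule cInf_eq_minimum)
  show "sqcost d A (mmean A) \<in> sqcost d A ` rvec d" using mmean_rvec[OF assms(2)] by simp
next
  fix y assume "y \<in> sqcost d A ` rvec d"
  then obtain c where "y = sqcost d A c" by auto
  then show "sqcost d A (mmean A) \<le> y" using sqcost_decomp[OF assms(1), of d c] by simp
qed

lemma approx_of_close:
  assumes "A \<noteq> {#}" "set_mset A \<subseteq> rvec d" "m \<in> rvec d" "0 \<le> eps"
    and "(enorm d (vdiff m (mmean A)))^2 \<le> eps * (Opt d A / real (size A))"
  shows "approx_mean d A eps m"
proof -
  have n: "0 < real (size A)" using assms(1) by (simp add: nonempty_has_size)
  have "real (size A) * (enorm d (vdiff m (mmean A)))^2 \<le> eps * Opt d A"
    using assms(5) n by (simp add: field_simps)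
  then show ?thesis unfolding approx_mean_def
    using sqcost_decomp[OF assms(1), of d m] Opt_eq[OF assms(1,2)] assms(3) by (simp add: algebra_simps)
qed

definition Rd :: "(nat \<Rightarrow> real) multiset \<Rightarrow> nat \<Rightarrow> (nat \<Rightarrow> nat \<Rightarrow> real) pmf" where
  "Rd A s = Pi_pmf {0..<s} (\<lambda>_. 0) (\<lambda>_. pmf_of_multiset A)"

definition Qd :: "(nat \<Rightarrow> real) multiset \<Rightarrow> nat \<Rightarrow> nat \<Rightarrow> (nat \<Rightarrow> nat \<Rightarrow> nat \<Rightarrow> real) pmf" where
  "Qd A k s = Pi_pmf {0..<k} (\<lambda>_ _. 0) (\<lambda>_. Rd A s)"

definition gm :: "nat \<Rightarrow> (nat \<Rightarrow> nat \<Rightarrow> real) \<Rightarrow> nat \<Rightarrow> real" where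
  "gm s z = (\<lambda>t. (\<Sum>j<s. z j t) / real s)"

lemma draws_eq: "draws A k s = map_pmf case_prod (Qd A k s)"
proof (rule pmf_eqI)
  fix x :: "nat \<times> nat \<Rightarrow> nat \<Rightarrow> real"
  have inj: "inj (case_prod :: (nat \<Rightarrow> nat \<Rightarrow> nat \<Rightarrow> real) \<Rightarrow> _)"
    by (rule injI) (metis curry_case_prod)
  have xe: "x = case_prod (curry x)" by simp
  have r: "pmf (map_pmf case_prod (Qd A k s)) x = pmf (Qd A k s) (curry x)"
    by (subst xe, rule pmf_map_inj'[OF inj])
  let ?K = "{0..<k}" and ?S = "{0..<s}" and ?P = "pmf_of_multiset A"
  have L: "pmf (draws A k s) x = (if \<forall>y. y \<notin> ?K \<times> ?S \<longrightarrow> x y = (\<lambda>_. 0) then \<Prod>y\<in>?K \<times> ?S. pmf ?P (x y) else 0)"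
    unfolding draws_def by (rule pmf_Pi) simp
  have R: "pmf (Qd A k s) (curry x) = (if \<forall>i. i \<notin> ?K \<longrightarrow> curry x i = (\<lambda>_ _. 0) then \<Prod>i\<in>?K. pmf (Rd A s) (curry x i) else 0)"
    unfolding Qd_def by (rule pmf_Pi) simp
  have Ri0: "pmf (Rd A s) (curry x i) = (if \<forall>j. j \<notin> ?S \<longrightarrow> curry x i j = (\<lambda>_. 0) then \<Prod>j\<in>?S. pmf ?P (curry x i j) else 0)" for i
    unfolding Rd_def by (rule pmf_Pi) simp
  have Ri: "pmf (Rd A s) (curry x i) = (if \<forall>j. j \<notin> ?S \<longrightarrow> x (i, j) = (\<lambda>_. 0) then \<Prod>j\<in>?S. pmf ?P (x (i, j)) else 0)" for i
    using Ri0[of i] by (simp only: curry_conv)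
  show "pmf (draws A k s) x = pmf (map_pmf case_prod (Qd A k s)) x"
  proof (cases "\<forall>y. y \<notin> ?K \<times> ?S \<longrightarrow> x y = (\<lambda>_. 0)")
    case True
    then have c1: "\<forall>i. i \<notin> ?K \<longrightarrow> curry x i = (\<lambda>_ _. 0)" by (auto simp: fun_eq_iff)
    have "pmf (Qd A k s) (curry x) = (\<Prod>i\<in>?K. \<Prod>j\<in>?S. pmf ?P (x (i, j)))"
      using True c1 by (simp add: R Ri)
    also have "\<dots> = (\<Prod>y\<in>?K \<times> ?S. pmf ?P (x y))"
      by (simp add: prod.cartesian_product)
    finally show ?thesis using True L r by simp
  next
    case False
    then obtain i j where ij: "(i, j) \<notin> ?K \<times> ?S" "x (i, j) \<noteq> (\<lambda>_. 0)" by auto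
    have "pmf (Qd A k s) (curry x) = 0"
    proof (cases "i \<in> ?K")
      case False
      then have "curry x i \<noteq> (\<lambda>_ _. 0)" using ij by (metis curry_conv)
      then show ?thesis using False by (auto simp: R)
    next
      case True
      then have "j \<notin> ?S" using ij by auto
      then have "pmf (Rd A s) (curry x i) = 0" using ij by (auto simp: Ri)
      then show ?thesis using True by (auto simp: R)
    qed
    then show ?thesis using L[unfolded if_not_P[OF False]] r by simp
  qed
qed

lemma group_mean_case_prod: "group_mean s (case_prod y) i = gm s (y i)"
  by (simp add: group_mean_def gm_def)

lemma prob_groups:
  assumes "S' \<subseteq> {0..<k}"
  shows "measure_pmf.prob (draws A k s) {x. \<forall>i\<in>S'. group_mean s x i \<in> Bs}
       = (measure_pmf.prob (Rd A s) {z. gm s z \<in> Bs}) ^ card S'"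
proof -
  let ?p = "measure_pmf.prob (Rd A s) {z. gm s z \<in> Bs}"
  have "case_prod -` {x. \<forall>i\<in>S'. group_mean s x i \<in> Bs} = Pi {0..<k} (\<lambda>i. if i \<in> S' then {z. gm s z \<in> Bs} else UNIV)"
    using assms by (auto simp: group_mean_case_prod Pi_def)
  then have "measure_pmf.prob (draws A k s) {x. \<forall>i\<in>S'. group_mean s x i \<in> Bs}
      = measure_pmf.prob (Qd A k s) (Pi {0..<k} (\<lambda>i. if i \<in> S' then {z. gm s z \<in> Bs} else UNIV))"
    by (simp add: draws_eq)
  also have "\<dots> = (\<Prod>i\<in>{0..<k}. measure_pmf.prob (Rd A s) (if i \<in> S' then {z. gm s z \<in> Bs} else UNIV))"
    unfolding Qd_def by (rule measure_Pi_pmf_Pi) simp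
  also have "\<dots> = (\<Prod>i\<in>{0..<k}. if i \<in> S' then ?p else 1)"
    by (intro prod.cong) auto
  also have "\<dots> = (\<Prod>i\<in>{i\<in>{0..<k}. i \<in> S'}. ?p)"
    by (rule prod.inter_filter[symmetric]) simp
  also have "{i\<in>{0..<k}. i \<in> S'} = S'" using assms by auto
  finally show ?thesis by simp
qed

lemma finite_Rd: "A \<noteq> {#} \<Longrightarrow> finite (set_pmf (Rd A s))"
  unfolding Rd_def by (subst set_Pi_pmf) (auto intro!: finite_PiE_dflt)

lemma pair_marg:
  assumes "j \<noteq> j'" "j \<in> J" "j' \<in> J" "finite J"
  shows "map_pmf (\<lambda>z. (z j, z j')) (Pi_pmf J dflt (\<lambda>_. P)) = pair_pmf P P"
proof -
  have sub: "{j, j'} \<subseteq> J" using assms by auto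
  have "map_pmf (\<lambda>z. (z j, z j')) (Pi_pmf {j, j'} dflt (\<lambda>_. P))
      = map_pmf (\<lambda>z. (z j, z j')) (map_pmf (\<lambda>f x. if x \<in> {j, j'} then f x else dflt) (Pi_pmf J dflt (\<lambda>_. P)))"
    by (subst Pi_pmf_subset[OF assms(4) sub]) (rule refl)
  also have "\<dots> = map_pmf (\<lambda>z. (z j, z j')) (Pi_pmf J dflt (\<lambda>_. P))"
    by (simp add: map_pmf_comp)
  finally have e1: "map_pmf (\<lambda>z. (z j, z j')) (Pi_pmf J dflt (\<lambda>_. P)) = map_pmf (\<lambda>z. (z j, z j')) (Pi_pmf {j, j'} dflt (\<lambda>_. P))" ..
  have "Pi_pmf {j, j'} dflt (\<lambda>_. P) = map_pmf (\<lambda>(y,f). f(j:=y)) (pair_pmf P (Pi_pmf {j'} dflt (\<lambda>_. P)))"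
    using assms(1) by (subst Pi_pmf_insert) auto
  also have "Pi_pmf {j'} dflt (\<lambda>_. P) = map_pmf (\<lambda>a b. if b = j' then a else dflt) P"
    by (rule Pi_pmf_singleton)
  finally have e2: "Pi_pmf {j, j'} dflt (\<lambda>_. P) = map_pmf (\<lambda>(y,f). f(j:=y)) (pair_pmf P (map_pmf (\<lambda>a b. if b = j' then a else dflt) P))" .
  have "map_pmf (\<lambda>z. (z j, z j')) (Pi_pmf {j, j'} dflt (\<lambda>_. P)) = map_pmf (\<lambda>x. x) (pair_pmf P P)"
    unfolding e2 pair_map_pmf2 map_pmf_comp using assms(1)
    by (intro map_pmf_cong) auto
  then show ?thesis using e1 by simp
qed

lemma expect_pair:
  fixes F :: "_ \<Rightarrow> real"
  assumes "finite (set_pmf P)"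
  shows "measure_pmf.expectation (pair_pmf P P) (\<lambda>x. F (fst x) * F (snd x)) = (measure_pmf.expectation P F)^2"
proof -
  let ?S = "set_pmf P"
  have "measure_pmf.expectation (pair_pmf P P) (\<lambda>x. F (fst x) * F (snd x))
      = (\<Sum>x\<in>?S \<times> ?S. F (fst x) * F (snd x) * pmf (pair_pmf P P) x)"
    using assms by (intro integral_measure_pmf_real) auto
  also have "\<dots> = (\<Sum>a\<in>?S. \<Sum>b\<in>?S. (F a * pmf P a) * (F b * pmf P b))"
    by (subst sum.cartesian_product) (auto intro!: sum.cong simp: pmf_pair algebra_simps)
  also have "\<dots> = (\<Sum>a\<in>?S. F a * pmf P a) * (\<Sum>b\<in>?S. F b * pmf P b)"
    by (simp add: sum_product)
  also have "(\<Sum>a\<in>?S. F a * pmf P a) = measure_pmf.expectation P F"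
    using assms by (intro integral_measure_pmf_real[symmetric]) auto
  finally show ?thesis by (simp add: power2_eq_square)
qed

lemma E_cross:
  fixes F :: "_ \<Rightarrow> real"
  assumes "A \<noteq> {#}" "j < s" "j' < s"
  shows "measure_pmf.expectation (Rd A s) (\<lambda>z. F (z j) * F (z j'))
       = (if j = j' then measure_pmf.expectation (pmf_of_multiset A) (\<lambda>p. (F p)^2)
          else (measure_pmf.expectation (pmf_of_multiset A) F)^2)"
proof (cases "j = j'")
  case True
  have "measure_pmf.expectation (Rd A s) (\<lambda>z. F (z j) * F (z j'))
      = measure_pmf.expectation (map_pmf (\<lambda>z. z j) (Rd A s)) (\<lambda>p. (F p)^2)"
    using True by (simp add: power2_eq_square)
  also have "map_pmf (\<lambda>z. z j) (Rd A s) = pmf_of_multiset A"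
    unfolding Rd_def using assms by (subst Pi_pmf_component) auto
  finally show ?thesis using True by simp
next
  case False
  have "measure_pmf.expectation (Rd A s) (\<lambda>z. F (z j) * F (z j'))
      = measure_pmf.expectation (map_pmf (\<lambda>z. (z j, z j')) (Rd A s)) (\<lambda>x. F (fst x) * F (snd x))"
    by simp
  also have "map_pmf (\<lambda>z. (z j, z j')) (Rd A s) = pair_pmf (pmf_of_multiset A) (pmf_of_multiset A)"
    unfolding Rd_def using assms False by (intro pair_marg) auto
  finally show ?thesis using False assms by (simp add: expect_pair)
qed

lemma swap_msum: "(\<Sum>p\<in>#A. \<Sum>t<d. f p t) = (\<Sum>t<d. \<Sum>p\<in>#A. f p t)" for f :: "_ \<Rightarrow> nat \<Rightarrow> real"
  by (induction A) (auto simp: sum.distrib)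

lemma var_Rd:
  assumes A: "A \<noteq> {#}" and s: "0 < s"
  shows "measure_pmf.expectation (Rd A s) (\<lambda>z. (enorm d (vdiff (gm s z) (mmean A)))^2)
       = sqcost d A (mmean A) / (real (size A) * real s)"
proof -
  define mu where "mu = mmean A"
  define F where "F t p = p t - mu t" for t and p :: "nat \<Rightarrow> real"
  define P where "P = pmf_of_multiset A"
  define v where "v t = measure_pmf.expectation P (\<lambda>p. (F t p)^2)" for t
  have int: "integrable (measure_pmf (Rd A s)) f" for f :: "_ \<Rightarrow> real"
    by (rule integrable_measure_pmf_finite[OF finite_Rd[OF A]])
  have pw: "(enorm d (vdiff (gm s z) mu))^2 = (\<Sum>t<d. \<Sum>j<s. \<Sum>j'<s. F t (z j) * F t (z j')) / (real s)^2" for z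
  proof -
    have g: "gm s z t - mu t = (\<Sum>j<s. F t (z j)) / real s" for t
      using s by (simp add: gm_def F_def sum_subtractf field_simps)
    have "(enorm d (vdiff (gm s z) mu))^2 = (\<Sum>t<d. ((\<Sum>j<s. F t (z j)) / real s)^2)"
      by (simp add: enorm_sq vdiff_def g)
    also have "\<dots> = (\<Sum>t<d. (\<Sum>j<s. \<Sum>j'<s. F t (z j) * F t (z j')) / (real s)^2)"
      by (intro sum.cong refl) (simp add: power_divide power2_eq_square sum_product)
    finally show ?thesis by (simp add: sum_divide_distrib)
  qed
  have EF0: "measure_pmf.expectation P (F t) = 0" for t
    unfolding P_def using A by (simp add: expect_multiset F_def mu_def centered)
  have "measure_pmf.expectation (Rd A s) (\<lambda>z. (enorm d (vdiff (gm s z) mu))^2)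
      = (\<Sum>t<d. \<Sum>j<s. \<Sum>j'<s. measure_pmf.expectation (Rd A s) (\<lambda>z. F t (z j) * F t (z j'))) / (real s)^2"
    by (simp add: pw int Bochner_Integration.integral_sum)
  also have "\<dots> = (\<Sum>t<d. \<Sum>j<s. \<Sum>j'<s. if j = j' then v t else 0) / (real s)^2"
    using A by (intro arg_cong2[where f="(/)"] sum.cong refl) (auto simp: E_cross v_def P_def[symmetric] EF0)
  also have "\<dots> = (\<Sum>t<d. real s * v t) / (real s)^2"
    by simp
  also have "\<dots> = (\<Sum>t<d. v t) / real s"
    using s by (simp add: sum_distrib_left[symmetric] power2_eq_square)
  also have "(\<Sum>t<d. v t) = sqcost d A mu / real (size A)"
  proof -
    have "(\<Sum>t<d. v t) = (\<Sum>t<d. (\<Sum>p\<in>#A. (F t p)^2) / real (size A))"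
      unfolding v_def P_def using A by (simp add: expect_multiset)
    also have "\<dots> = (\<Sum>p\<in>#A. \<Sum>t<d. (F t p)^2) / real (size A)"
      by (simp add: sum_divide_distrib[symmetric] swap_msum)
    also have "(\<Sum>p\<in>#A. \<Sum>t<d. (F t p)^2) = sqcost d A mu"
      by (simp add: sqcost_def enorm_sq vdiff_def F_def)
    finally show ?thesis .
  qed
  finally show ?thesis by (simp add: mu_def)
qed

lemma pB_bound:
  fixes d :: nat
  assumes A: "A \<noteq> {#}" and s: "0 < s" and eps: "0 < eps" and sa: "18432 / eps \<le> real s"
  defines "V \<equiv> sqcost d A (mmean A) / real (size A)"
  shows "measure_pmf.prob (Rd A s) {z. gm s z \<in> {v. sqrt (eps * V / 36) < enorm d (vdiff v (mmean A))}} \<le> 1/512"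
proof -
  define u where "u z = (enorm d (vdiff (gm s z) (mmean A)))^2" for z
  define r where "r = sqrt (eps * V / 36)"
  have n: "0 < real (size A)" using A by (simp add: nonempty_has_size)
  have V0: "0 \<le> V" unfolding V_def sqcost_def msum by (intro divide_nonneg_nonneg sum_nonneg mult_nonneg_nonneg) auto
  have Eu: "measure_pmf.expectation (Rd A s) u = V / real s"
    unfolding u_def V_def using var_Rd[OF A s] by simp
  have int: "integrable (measure_pmf (Rd A s)) f" for f :: "_ \<Rightarrow> real"
    by (rule integrable_measure_pmf_finite[OF finite_Rd[OF A]])
  show ?thesis
  proof (cases "V = 0")
    case True
    then have "measure_pmf.expectation (Rd A s) u = 0" using Eu by simp
    then have "AE z in measure_pmf (Rd A s). u z = 0"
      using integral_nonneg_eq_0_iff_AE[OF int, of u] by (simp add: u_def)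
    then have "AE z in measure_pmf (Rd A s). \<not> (gm s z \<in> {v. sqrt (eps * V / 36) < enorm d (vdiff v (mmean A))})"
      by eventually_elim (simp add: True u_def)
    from measure_pmf.prob_eq_0_AE[OF this] show ?thesis by simp
  next
    case False
    then have V1: "0 < V" using V0 by simp
    have r2: "r^2 = eps * V / 36" unfolding r_def using V1 eps by simp
    have rpos: "0 < r" unfolding r_def using V1 eps by simp
    have sub: "{z. gm s z \<in> {v. r < enorm d (vdiff v (mmean A))}} \<subseteq> {z \<in> space (measure_pmf (Rd A s)). r^2 \<le> u z}"
    proof (rule subsetI)
      fix z assume "z \<in> {z. gm s z \<in> {v. r < enorm d (vdiff v (mmean A))}}"
      then have "r < enorm d (vdiff (gm s z) (mmean A))" by simp
      then have "r^2 \<le> u z" unfolding u_def using rpos by (intro power_mono) auto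
      then show "z \<in> {z \<in> space (measure_pmf (Rd A s)). r^2 \<le> u z}" by simp
    qed
    have "measure_pmf.prob (Rd A s) {z. gm s z \<in> {v. r < enorm d (vdiff v (mmean A))}}
        \<le> measure_pmf.prob (Rd A s) {z \<in> space (measure_pmf (Rd A s)). r^2 \<le> u z}"
      by (rule measure_pmf.finite_measure_mono[OF sub]) simp
    also have "\<dots> \<le> measure_pmf.expectation (Rd A s) u / r^2"
      by (rule integral_Markov_inequality_measure[OF int]) (use rpos in \<open>auto simp: u_def\<close>)
    also have "\<dots> = 36 / (real s * eps)"
      unfolding Eu r2 using V1 eps s by (simp add: field_simps)
    also have "\<dots> \<le> 1/512"
    proof -
      have "18432 \<le> real s * eps" using sa eps by (simp add: field_simps)
      then show ?thesis using eps s by (simp add: field_simps)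
    qed
    finally show ?thesis unfolding r_def .
  qed
qed

lemma quarter_pow_le:
  assumes "0 < delta" "delta < 1" "ln (1 / delta) \<le> real k"
  shows "(1/4::real) ^ k \<le> delta"
proof -
  have e: "1/4 \<le> exp (-1::real)"
    using exp_le by (simp add: exp_minus field_simps)
  have "(1/4::real) ^ k \<le> exp (-1) ^ k" using e by (intro power_mono) auto
  also have "\<dots> = exp (real k * (-1))" using exp_of_nat_mult[of k "-1::real"] by simp
  also have "\<dots> \<le> exp (- ln (1 / delta))" using assms(3) by simp
  also have "\<dots> = delta" using assms(1) by (simp add: ln_div)
  finally show ?thesis .
qed

theorem corollary3p6:
  shows "\<exists>a b :: real. a > 0 \<and> b > 0 \<and>
    (\<forall>(d::nat) (A :: (nat \<Rightarrow> real) multiset) (eps::real) (delta::real).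
       A \<noteq> {#} \<longrightarrow> set_mset A \<subseteq> rvec d \<longrightarrow>
       0 < eps \<longrightarrow> eps < 1 \<longrightarrow> 0 < delta \<longrightarrow> delta < 1 \<longrightarrow>
       (let k = nat \<lceil>b * ln (1 / delta)\<rceil>; s = nat \<lceil>a / eps\<rceil> in
        measure_pmf.prob (draws A k s)
          {x. \<forall>m. geo_median d k (group_mean s x) m \<longrightarrow> approx_mean d A eps m}
        \<ge> 1 - delta))"
proof (rule exI[of _ "18432::real"], rule exI[of _ "1::real"], intro conjI allI impI)
  fix d :: nat and A :: "(nat \<Rightarrow> real) multiset" and eps delta :: real
  assume A: "A \<noteq> {#}" and Ad: "set_mset A \<subseteq> rvec d" and eps0: "0 < eps" and eps1: "eps < 1"
    and del0: "0 < delta" and del1: "delta < 1"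
  define k where "k = nat \<lceil>1 * ln (1 / delta)\<rceil>"
  define s where "s = nat \<lceil>18432 / eps\<rceil>"
  define good where "good x \<longleftrightarrow> (\<forall>m. geo_median d k (group_mean s x) m \<longrightarrow> approx_mean d A eps m)" for x
  have lnpos: "0 < ln (1 / delta)" using del0 del1 by simp
  have kge: "ln (1 / delta) \<le> real k"
  proof -
    have "ln (1 / delta) \<le> of_int \<lceil>ln (1 / delta)\<rceil>" by (rule le_of_int_ceiling)
    moreover have "0 \<le> \<lceil>ln (1 / delta)\<rceil>" using lnpos by simp
    ultimately show ?thesis unfolding k_def by simp
  qed
  have kpos: "0 < k" using kge lnpos by simp
  have sa: "18432 / eps \<le> real s"
  proof -
    have "18432 / eps \<le> of_int \<lceil>18432 / eps\<rceil>" by (rule le_of_int_ceiling)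
    moreover have "0 \<le> \<lceil>18432 / eps\<rceil>"
    proof -
      have "0 < 18432 / eps" using eps0 by simp
      then have "-1 < 18432 / eps" by linarith
      then show ?thesis by simp
    qed
    ultimately show ?thesis unfolding s_def by simp
  qed
  have spos: "0 < s" using sa eps0
    by (metis divide_pos_pos of_nat_0_less_iff order_less_le_trans zero_less_numeral)
  define mu where "mu = mmean A"
  define V where "V = sqcost d A mu / real (size A)"
  define r where "r = sqrt (eps * V / 36)"
  define Bs where "Bs = {v. r < enorm d (vdiff v mu)}"
  define pB where "pB = measure_pmf.prob (Rd A s) {z. gm s z \<in> Bs}"
  have n: "0 < real (size A)" using A by (simp add: nonempty_has_size)
  have V0: "0 \<le> V" unfolding V_def sqcost_def msum
    by (intro divide_nonneg_nonneg sum_nonneg mult_nonneg_nonneg) auto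
  have r0: "0 \<le> r" unfolding r_def using V0 eps0 by simp
  have r2: "r^2 = eps * V / 36" unfolding r_def using V0 eps0 by simp
  have OptV: "Opt d A / real (size A) = V"
    unfolding V_def mu_def using Opt_eq[OF A Ad] by simp
  have mur: "mu \<in> rvec d" unfolding mu_def by (rule mmean_rvec[OF Ad])
  have pB1: "pB \<le> 1/512"
    unfolding pB_def Bs_def r_def V_def mu_def by (rule pB_bound[OF A spos eps0 sa])
  have pB0: "0 \<le> pB" unfolding pB_def by simp
  define Fam where "Fam = {S'. S' \<subseteq> {0..<k} \<and> k \<le> 3 * card S'}"
  define E where "E S' = {x. \<forall>i\<in>S'. group_mean s x i \<in> Bs}" for S'
  have FamPow: "Fam \<subseteq> Pow {0..<k}" by (auto simp: Fam_def)
  have finFam: "finite Fam" using FamPow by (rule finite_subset) simp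
  have cont: "{x. \<not> good x} \<subseteq> (\<Union>S'\<in>Fam. E S')"
  proof
    fix x assume "x \<in> {x. \<not> good x}"
    then obtain m where gmd: "geo_median d k (group_mean s x) m" and na: "\<not> approx_mean d A eps m"
      by (auto simp: good_def)
    define S' where "S' = {i\<in>{0..<k}. group_mean s x i \<in> Bs}"
    have "k \<le> 3 * card S'"
    proof (rule ccontr)
      assume "\<not> k \<le> 3 * card S'"
      then have few: "3 * card S' < k" by simp
      have eqS: "{i\<in>{..<k}. r < enorm d (vdiff (group_mean s x i) mu)} = S'"
        by (auto simp: S'_def Bs_def)
      have mr: "m \<in> rvec d" using gmd by (simp add: geo_median_def)
      have mn: "(\<Sum>i<k. enorm d (vdiff (group_mean s x i) m)) \<le> (\<Sum>i<k. enorm d (vdiff (group_mean s x i) mu))"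
        using gmd mur by (simp add: geo_median_def)
      have "enorm d (vdiff m mu) \<le> 6 * r"
        by (rule geo_robust[OF mn _ r0]) (use few eqS in simp)
      then have "(enorm d (vdiff m mu))^2 \<le> (6 * r)^2"
        by (intro power_mono) (auto simp: enorm_nonneg)
      also have "\<dots> = eps * (Opt d A / real (size A))" using r2 OptV by (simp add: power_mult_distrib)
      finally have "approx_mean d A eps m"
        using approx_of_close[OF A Ad mr] eps0 unfolding mu_def by simp
      then show False using na by simp
    qed
    then have "S' \<in> Fam" by (auto simp: Fam_def S'_def)
    moreover have "x \<in> E S'" by (auto simp: E_def S'_def)
    ultimately show "x \<in> (\<Union>S'\<in>Fam. E S')" by blast
  qed
  have probE: "measure_pmf.prob (draws A k s) (E S') \<le> (1/8)^k" if "S' \<in> Fam" for S'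
  proof -
    have sub: "S' \<subseteq> {0..<k}" and kc: "k \<le> 3 * card S'" using that by (auto simp: Fam_def)
    have "measure_pmf.prob (draws A k s) (E S') = pB ^ card S'"
      unfolding E_def pB_def by (rule prob_groups[OF sub])
    also have "\<dots> \<le> (1/512) ^ card S'" using pB0 pB1 by (intro power_mono) auto
    also have "\<dots> = (1/8) ^ (3 * card S')"
    proof -
      have "(1/512::real) = (1/8)^3" by (simp add: power_divide)
      then show ?thesis by (simp only: power_mult)
    qed
    also have "\<dots> \<le> (1/8) ^ k" using kc by (intro power_decreasing) auto
    finally show ?thesis .
  qed
  have "measure_pmf.prob (draws A k s) {x. \<not> good x} \<le> measure_pmf.prob (draws A k s) (\<Union>S'\<in>Fam. E S')"
    by (rule measure_pmf.finite_measure_mono[OF cont]) simp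
  also have "\<dots> \<le> (\<Sum>S'\<in>Fam. measure_pmf.prob (draws A k s) (E S'))"
    by (rule measure_pmf.finite_measure_subadditive_finite[OF finFam]) simp
  also have "\<dots> \<le> (\<Sum>S'\<in>Fam. (1/8::real)^k)" by (intro sum_mono probE)
  also have "\<dots> = real (card Fam) * (1/8)^k" by simp
  also have "\<dots> \<le> 2^k * (1/8)^k"
  proof -
    have "card Fam \<le> card (Pow {0..<k})" using FamPow by (intro card_mono) auto
    then have "real (card Fam) \<le> 2^k" by (simp add: card_Pow)
    then show ?thesis by (intro mult_right_mono) auto
  qed
  also have "\<dots> = (1/4)^k" by (simp add: power_mult_distrib[symmetric])
  also have "\<dots> \<le> delta" by (rule quarter_pow_le[OF del0 del1 kge])
  finally have bad: "measure_pmf.prob (draws A k s) {x. \<not> good x} \<le> delta" .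
  have "measure_pmf.prob (draws A k s) {x. good x} = 1 - measure_pmf.prob (draws A k s) {x. \<not> good x}"
  proof -
    have "{x. good x} = space (measure_pmf (draws A k s)) - {x. \<not> good x}" by auto
    then show ?thesis using measure_pmf.prob_compl[of "{x. \<not> good x}" "draws A k s"] by simp
  qed
  with bad have "1 - delta \<le> measure_pmf.prob (draws A k s) {x. good x}" by simp
  then show "let k = nat \<lceil>1 * ln (1 / delta)\<rceil>; s = nat \<lceil>18432 / eps\<rceil> in
        1 - delta \<le> measure_pmf.prob (draws A k s)
          {x. \<forall>m. geo_median d k (group_mean s x) m \<longrightarrow> approx_mean d A eps m}"
    unfolding Let_def k_def[symmetric] s_def[symmetric] good_def .
qed simp_all

end
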